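(* Let $\{V_0(n)\}_{n\in\mathbb{Z}}$ be a real-valued sequence and let $\psi_1,\dots,\psi_k$ be sequences satisfying $$\big(-\bigtriangleup^2+V_0(n)\big)\psi_i(n)=\epsilon_i\,\psi_i(n+2),\qquad i=1,\dots,k,$$ for pairwise different real constants $\epsilon_1,\dots,\epsilon_k$, and assume the Casoratians $C(\psi_1,\dots,\psi_j)(n)$ are nonzero for all $n$ and $j=1,\dots,k$. Define recursively, for $i=1,\dots,k$, $$\hat\psi_i(n)=\big(-\bigtriangleup+f_{i-1}(n)\big)\cdots\big(-\bigtriangleup+f_1(n)\big)\psi_i(n),\qquad f_i(n)=\frac{\bigtriangleup\hat\psi_i(n)}{\hat\psi_i(n)},$$ $$V_i(n)=V_{i-1}(n+1)-2\bigtriangleup f_i(n+1)$$ (with $\hat\psi_1=\psi_1$; the $f_j(n)$ act as multiplication operators). Then for $i=1,\dots,k$: $$\hat\psi_i(n)=(-1)^{i-1}\frac{C(\psi_1,\dots,\psi_i)(n)}{C(\psi_1,\dots,\psi_{i-1})(n)},\qquad \big(-\bigtriangleup^2+V_{i-1}(n)\big)\hat\psi_i(n)=\epsilon_i\,\hat\psi_i(n+2),$$ $$f_j(n)=\frac{C(\psi_1,\dots,\psi_{j-1})(n)}{C(\psi_1,\dots,\psi_{j-1})(n+1)}\cdot\frac{C(\psi_1,\dots,\psi_j)(n+1)}{C(\psi_1,\dots,\psi_j)(n)}-1,$$ and $$V_i(n)=V_0(n+i)-2\bigtriangleup\big(f_1(n+i)+f_2(n+i-1)+\dots+f_i(n+1)\big)=V_0(n+i)-2\bigtriangleup\frac{D_i(n)}{C(\psi_1,\dots,\psi_i)(n+1)},$$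 where $D_i(n)$ is the $i\times i$ determinant whose columns are indexed by $\psi_1,\dots,\psi_i$ and whose rows are the values at $n+1,n+2,\dots,n+i-1,n+i+1$, i.e. $D_i(n)=\det\big(\psi_c(n+r_\ell)\big)_{\ell,c=1}^{i}$ with $(r_1,\dots,r_i)=(1,2,\dots,i-1,i+1)$.
   Context: For a sequence $\psi:\mathbb{Z}\to\mathbb{C}$, $\bigtriangleup\psi(n)=\psi(n+1)-\psi(n)$ and $\bigtriangleup^2\psi(n)=\psi(n+2)-2\psi(n+1)+\psi(n)$. The Casoratian of sequences $\psi_1,\dots,\psi_m$ is $C(\psi_1,\dots,\psi_m)(n)=\det\big(\psi_c(n+r-1)\big)_{r,c=1}^{m}$ (rows $n,n+1,\dots,n+m-1$), with the empty Casoratian $C()(n)=1$. *)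

theory Defs
  imports Complex_Main "Jordan_Normal_Form.Determinant"
begin

definition fdiff :: "(int \<Rightarrow> complex) \<Rightarrow> int \<Rightarrow> complex" where
  "fdiff \<psi> n = \<psi> (n + 1) - \<psi> n"

definition fdiff2 :: "(int \<Rightarrow> complex) \<Rightarrow> int \<Rightarrow> complex" where
  "fdiff2 \<psi> n = \<psi> (n + 2) - 2 * \<psi> (n + 1) + \<psi> n"

(* Casoratian of a list of sequences: det (psi_c(n+r))_{r,c}, rows n..n+m-1;
   empty Casoratian = det of the 0x0 matrix = 1 *)
definition casoratian :: "(int \<Rightarrow> complex) list \<Rightarrow> int \<Rightarrow> complex" where
  "casoratian \<psi>s n = det (mat (length \<psi>s) (length \<psi>s) (\<lambda>(r, c). (\<psi>s ! c) (n + int r)))"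

definition Cas :: "(nat \<Rightarrow> int \<Rightarrow> complex) \<Rightarrow> nat \<Rightarrow> int \<Rightarrow> complex" where
  "Cas \<psi> j n = casoratian (map \<psi> [1..<Suc j]) n"

(* D_i(n): rows n+1, ..., n+i-1, n+i+1; columns psi_1..psi_i *)
definition Dcas :: "(nat \<Rightarrow> int \<Rightarrow> complex) \<Rightarrow> nat \<Rightarrow> int \<Rightarrow> complex" where
  "Dcas \<psi> i n = det (mat i i (\<lambda>(r, c). \<psi> (Suc c)
      (n + (if r + 1 < i then int r + 1 else int i + 1))))"

(* apply (-\<Delta> + g_m) \<circ> ... \<circ> (-\<Delta> + g_1) to \<phi>, for gs = [g_1, ..., g_m] *)
definition apply_ops :: "(int \<Rightarrow> complex) list \<Rightarrow> (int \<Rightarrow> complex) \<Rightarrow> (int \<Rightarrow> complex)" where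
  "apply_ops gs \<phi> = foldl (\<lambda>\<chi> g. (\<lambda>n. - fdiff \<chi> n + g n * \<chi> n)) \<phi> gs"

primrec fs :: "(nat \<Rightarrow> int \<Rightarrow> complex) \<Rightarrow> nat \<Rightarrow> (int \<Rightarrow> complex) list" where
  "fs \<psi> 0 = []"
| "fs \<psi> (Suc i) = fs \<psi> i @
     [(let h = apply_ops (fs \<psi> i) (\<psi> (Suc i)) in (\<lambda>n. fdiff h n / h n))]"

definition hatpsi :: "(nat \<Rightarrow> int \<Rightarrow> complex) \<Rightarrow> nat \<Rightarrow> int \<Rightarrow> complex" where
  "hatpsi \<psi> i = apply_ops (fs \<psi> (i - 1)) (\<psi> i)"

definition ff :: "(nat \<Rightarrow> int \<Rightarrow> complex) \<Rightarrow> nat \<Rightarrow> int \<Rightarrow> complex" where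
  "ff \<psi> j = fs \<psi> j ! (j - 1)"

primrec VV :: "(int \<Rightarrow> real) \<Rightarrow> (nat \<Rightarrow> int \<Rightarrow> complex) \<Rightarrow> nat \<Rightarrow> int \<Rightarrow> complex" where
  "VV V0 \<psi> 0 = (\<lambda>n. complex_of_real (V0 n))"
| "VV V0 \<psi> (Suc i) = (\<lambda>n. VV V0 \<psi> i (n + 1) - 2 * fdiff (ff \<psi> (Suc i)) (n + 1))"

end

theory Submission
  imports Defs
begin

lemma intertw_alg:
  fixes h0 h1 h2 h3 p0 p1 p2 p3 v0 v1 e e' :: complex
  assumes nz: "h0 \<noteq> 0" "h1 \<noteq> 0" "h2 \<noteq> 0" "h3 \<noteq> 0"
    and eh0: "- (h2 - 2 * h1 + h0) + v0 * h0 = e' * h2"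
    and eh1: "- (h3 - 2 * h2 + h1) + v1 * h1 = e' * h3"
    and ep0: "- (p2 - 2 * p1 + p0) + v0 * p0 = e * p2"
    and ep1: "- (p3 - 2 * p2 + p1) + v1 * p1 = e * p3"
  shows "- ((- (p3 - p2) + (h3 - h2) / h2 * p2) - 2 * (- (p2 - p1) + (h2 - h1) / h1 * p1)
            + (- (p1 - p0) + (h1 - h0) / h0 * p0))
         + (v1 - 2 * ((h3 - h2) / h2 - (h2 - h1) / h1)) * (- (p1 - p0) + (h1 - h0) / h0 * p0)
         = e * (- (p3 - p2) + (h3 - h2) / h2 * p2)"
proof -
  have v0: "v0 = (e' * h2 + h2 - 2 * h1 + h0) / h0" using eh0 nz by (simp add: field_simps)
  have v1: "v1 = (e' * h3 + h3 - 2 * h2 + h1) / h1" using eh1 nz by (simp add: field_simps)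
  have E0: "- (p2 - 2 * p1 + p0) + v0 * p0 - e * p2 = 0" using ep0 by simp
  have E1: "- (p3 - 2 * p2 + p1) + v1 * p1 - e * p3 = 0" using ep1 by simp
  have key: "- ((- (p3 - p2) + (h3 - h2) / h2 * p2) - 2 * (- (p2 - p1) + (h2 - h1) / h1 * p1)
            + (- (p1 - p0) + (h1 - h0) / h0 * p0))
         + (v1 - 2 * ((h3 - h2) / h2 - (h2 - h1) / h1)) * (- (p1 - p0) + (h1 - h0) / h0 * p0)
         - e * (- (p3 - p2) + (h3 - h2) / h2 * p2)
      = (h3 / h2) * (- (p2 - 2 * p1 + p0) + v0 * p0 - e * p2) - (- (p3 - 2 * p2 + p1) + v1 * p1 - e * p3)"
    unfolding v0 v1 using nz by (simp add: field_simps) algebra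
  have "- ((- (p3 - p2) + (h3 - h2) / h2 * p2) - 2 * (- (p2 - p1) + (h2 - h1) / h1 * p1)
            + (- (p1 - p0) + (h1 - h0) / h0 * p0))
         + (v1 - 2 * ((h3 - h2) / h2 - (h2 - h1) / h1)) * (- (p1 - p0) + (h1 - h0) / h0 * p0)
         - e * (- (p3 - p2) + (h3 - h2) / h2 * p2) = (h3 / h2) * 0 - 0"
    using key unfolding E0 E1 .
  then show ?thesis by simp
qed

definition acoef :: "(int \<Rightarrow> complex) list \<Rightarrow> nat \<Rightarrow> int \<Rightarrow> complex" where
  "acoef gs = foldl (\<lambda>a g. \<lambda>r n. (if r = 0 then 0 else - a (r - 1) (n + 1)) + (1 + g n) * a r n)
      (\<lambda>r n. if r = 0 then 1 else 0) gs"

lemma acoef_Nil: "acoef [] r n = (if r = 0 then 1 else 0)"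
  by (simp add: acoef_def)

lemma acoef_snoc: "acoef (gs @ [g]) r n = (if r = 0 then 0 else - acoef gs (r - 1) (n + 1)) + (1 + g n) * acoef gs r n"
  by (simp add: acoef_def)

lemma acoef_zero: "length gs < r \<Longrightarrow> acoef gs r n = 0"
proof (induction gs arbitrary: r n rule: rev_induct)
  case Nil then show ?case by (simp add: acoef_Nil)
next
  case (snoc g gs) then show ?case by (simp add: acoef_snoc)
qed

lemma acoef_top: "acoef gs (length gs) n = (-1) ^ length gs"
proof (induction gs arbitrary: n rule: rev_induct)
  case Nil then show ?case by (simp add: acoef_Nil)
next
  case (snoc g gs) then show ?case by (simp add: acoef_snoc acoef_zero)
qed

lemma apply_ops_snoc: "apply_ops (gs @ [g]) \<phi> = (\<lambda>n. - fdiff (apply_ops gs \<phi>) n + g n * apply_ops gs \<phi> n)"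
  by (simp add: apply_ops_def)

lemma apply_ops_Nil: "apply_ops [] \<phi> = \<phi>"
  by (simp add: apply_ops_def)

lemma apply_ops_sum: "apply_ops gs \<phi> n = (\<Sum>r<Suc (length gs). acoef gs r n * \<phi> (n + int r))"
proof (induction gs arbitrary: n rule: rev_induct)
  case Nil then show ?case by (simp add: acoef_Nil apply_ops_Nil)
next
  case (snoc g gs)
  define m where "m = length gs"
  define X where "X = apply_ops gs \<phi>"
  have X: "\<And>n. X n = (\<Sum>r<Suc m. acoef gs r n * \<phi> (n + int r))" using snoc m_def X_def by simp
  have "apply_ops (gs @ [g]) \<phi> n = - X (n + 1) + (1 + g n) * X n"
    by (simp add: apply_ops_snoc X_def fdiff_def algebra_simps)
  also have "\<dots> = (\<Sum>r<Suc (Suc m). (if r = 0 then 0 else - acoef gs (r - 1) (n + 1)) * \<phi> (n + int r))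
       + (1 + g n) * (\<Sum>r<Suc (Suc m). acoef gs r n * \<phi> (n + int r))"
  proof -
    have a: "(\<Sum>r<Suc (Suc m). acoef gs r n * \<phi> (n + int r)) = X n"
      using X[of n] by (simp add: acoef_zero m_def)
    have b: "(\<Sum>r<Suc (Suc m). (if r = 0 then 0 else - acoef gs (r - 1) (n + 1)) * \<phi> (n + int r))
        = - X (n + 1)"
      unfolding sum.lessThan_Suc_shift X by (simp add: sum_negf algebra_simps)
    show ?thesis using a b by simp
  qed
  also have "\<dots> = (\<Sum>r<Suc (length (gs @ [g])). acoef (gs @ [g]) r n * \<phi> (n + int r))"
    by (simp add: acoef_snoc m_def sum.distrib sum_distrib_left algebra_simps)
  finally show ?case .
qed

lemma acoef_sub:
  "gs \<noteq> [] \<Longrightarrow> acoef gs (length gs - 1) n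
     = (-1) ^ (length gs - 1) * (\<Sum>l<length gs. 1 + (gs ! l) (n + int (length gs) - 1 - int l))"
proof (induction gs arbitrary: n rule: rev_induct)
  case Nil then show ?case by simp
next
  case (snoc g gs)
  show ?case
  proof (cases "gs = []")
    case True then show ?thesis using acoef_snoc[of "[]" g 0 n] by (simp add: acoef_Nil)
  next
    case False
    define m where "m = length gs"
    obtain m' where m': "m = Suc m'" using False unfolding m_def by (cases "length gs") auto
    have IH: "acoef gs m' (n + 1) = (-1) ^ m' * (\<Sum>l<m. 1 + (gs ! l) (n + int m - int l))"
      using snoc.IH[OF False, of "n+1"] by (simp add: m_def[symmetric] m' algebra_simps)
    have "acoef (gs @ [g]) (length (gs @ [g]) - 1) n = - acoef gs m' (n + 1) + (1 + g n) * (-1) ^ m"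
      using acoef_top[of gs n] by (simp add: acoef_snoc m_def[symmetric] m')
    also have "\<dots> = (-1) ^ m * ((\<Sum>l<m. 1 + (gs ! l) (n + int m - int l)) + (1 + g n))"
      unfolding IH by (simp add: m' algebra_simps)
    also have "\<dots> = (-1) ^ (length (gs @ [g]) - 1) *
        (\<Sum>l<length (gs @ [g]). 1 + ((gs @ [g]) ! l) (n + int (length (gs @ [g])) - 1 - int l))"
      by (simp add: m_def nth_append)
    finally show ?thesis .
  qed
qed


lemma length_fs[simp]: "length (fs \<psi> j) = j"
  by (induction j) auto

lemma fs_Suc: "fs \<psi> (Suc j) = fs \<psi> j @ [(\<lambda>n. fdiff (hatpsi \<psi> (Suc j)) n / hatpsi \<psi> (Suc j) n)]"
  by (simp add: hatpsi_def Let_def)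

lemma ff_Suc: "ff \<psi> (Suc j) = (\<lambda>n. fdiff (hatpsi \<psi> (Suc j)) n / hatpsi \<psi> (Suc j) n)"
  unfolding ff_def fs_Suc by (simp add: nth_append)

lemma fs_nth: "l < i \<Longrightarrow> fs \<psi> i ! l = ff \<psi> (Suc l)"
proof (induction i)
  case 0 then show ?case by simp
next
  case (Suc i)
  show ?case
  proof (cases "l < i")
    case True then show ?thesis using Suc by (simp add: fs_Suc nth_append)
  next
    case False then have "l = i" using Suc by simp
    then show ?thesis by (simp add: ff_def)
  qed
qed

lemma hatpsi_Suc: "hatpsi \<psi> (Suc j) = apply_ops (fs \<psi> j) (\<psi> (Suc j))"
  by (simp add: hatpsi_def)

lemma annihilate:
  assumes "\<And>l n. l \<in> {1..j} \<Longrightarrow> hatpsi \<psi> l n \<noteq> 0"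
  shows "l \<in> {1..j} \<Longrightarrow> apply_ops (fs \<psi> j) (\<psi> l) n = 0"
  using assms
proof (induction j arbitrary: l n)
  case 0 then show ?case by simp
next
  case (Suc j)
  show ?case
  proof (cases "l \<le> j")
    case True
    then have "\<And>n. apply_ops (fs \<psi> j) (\<psi> l) n = 0" using Suc by auto
    then show ?thesis by (simp add: fs_Suc apply_ops_snoc fdiff_def)
  next
    case False
    then have l: "l = Suc j" using Suc by auto
    have nz: "hatpsi \<psi> (Suc j) n \<noteq> 0" using Suc.prems(2)[of "Suc j"] by simp
    show ?thesis unfolding l fs_Suc apply_ops_snoc hatpsi_Suc[symmetric]
      using nz by (simp add: fdiff_def field_simps)
  qed
qed

definition MM :: "(nat \<Rightarrow> int \<Rightarrow> complex) \<Rightarrow> nat \<Rightarrow> (int \<Rightarrow> complex) \<Rightarrow> int \<Rightarrow> complex mat" where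
  "MM \<psi> j \<phi> n = mat (Suc j) (Suc j) (\<lambda>(r, c). (if c < j then \<psi> (Suc c) else \<phi>) (n + int r))"

definition Del :: "(nat \<Rightarrow> int \<Rightarrow> complex) \<Rightarrow> nat \<Rightarrow> int \<Rightarrow> nat \<Rightarrow> complex mat" where
  "Del \<psi> j n r = mat j j (\<lambda>(i, c). \<psi> (Suc c) (n + int (if i < r then i else Suc i)))"

lemma Cas_mat: "Cas \<psi> j n = det (mat j j (\<lambda>(r, c). \<psi> (Suc c) (n + int r)))"
proof -
  have "mat (length (map \<psi> [1..<Suc j])) (length (map \<psi> [1..<Suc j]))
      (\<lambda>(r, c). (map \<psi> [1..<Suc j] ! c) (n + int r)) = mat j j (\<lambda>(r, c). \<psi> (Suc c) (n + int r))"
    by (rule eq_matI) (auto simp del: upt_Suc)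
  then show ?thesis unfolding Cas_def casoratian_def by simp
qed

lemma Cas_0: "Cas \<psi> 0 n = 1"
  unfolding Cas_mat by (rule det_dim_zero) auto

lemma Cas_Suc: "Cas \<psi> (Suc j) n = det (MM \<psi> j (\<psi> (Suc j)) n)"
proof -
  have "mat (Suc j) (Suc j) (\<lambda>(r, c). \<psi> (Suc c) (n + int r)) = MM \<psi> j (\<psi> (Suc j)) n"
    unfolding MM_def by (rule eq_matI) (auto simp: less_Suc_eq)
  then show ?thesis unfolding Cas_mat by simp
qed

lemma MM_laplace:
  "det (MM \<psi> j \<phi> n) = (\<Sum>r<Suc j. \<phi> (n + int r) * ((-1) ^ (r + j) * det (Del \<psi> j n r)))"
proof -
  have car: "MM \<psi> j \<phi> n \<in> carrier_mat (Suc j) (Suc j)" unfolding MM_def by simp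
  have del: "r < Suc j \<Longrightarrow> mat_delete (MM \<psi> j \<phi> n) r j = Del \<psi> j n r" for r
    unfolding MM_def Del_def mat_delete_def by (rule eq_matI) auto
  have ent: "r < Suc j \<Longrightarrow> MM \<psi> j \<phi> n $$ (r, j) = \<phi> (n + int r)" for r
    unfolding MM_def by simp
  show ?thesis
    unfolding laplace_expansion_column[OF car lessI]
    by (rule sum.cong) (auto simp: cofactor_def del ent)
qed

lemma MM_psi_zero:
  assumes "l \<in> {1..j}" shows "det (MM \<psi> j (\<psi> l) n) = 0"
proof -
  have car: "MM \<psi> j (\<psi> l) n \<in> carrier_mat (Suc j) (Suc j)" unfolding MM_def by simp
  show ?thesis
    by (rule det_identical_columns[OF car, of "l - 1" j]) (use assms in \<open>auto simp: MM_def col_def\<close>)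
qed

lemma Del_top: "det (Del \<psi> j n j) = Cas \<psi> j n"
proof -
  have "Del \<psi> j n j = mat j j (\<lambda>(r, c). \<psi> (Suc c) (n + int r))"
    unfolding Del_def by (rule eq_matI) auto
  then show ?thesis by (simp add: Cas_mat)
qed

lemma Del_sub: "j \<ge> 1 \<Longrightarrow> det (Del \<psi> j n (j - 1)) = Dcas \<psi> j (n - 1)"
proof -
  assume j: "j \<ge> 1"
  have aux: "\<And>i. i < j \<Longrightarrow> \<not> Suc i < j \<Longrightarrow> n + (1 + int i) = n + int j" by simp
  have "Del \<psi> j n (j - 1) = mat j j (\<lambda>(r, c). \<psi> (Suc c)
      (n - 1 + (if r + 1 < j then int r + 1 else int j + 1)))"
    unfolding Del_def by (rule eq_matI) (use j in \<open>auto simp: aux\<close>)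
  then show ?thesis by (simp add: Dcas_def)
qed

lemma kernel:
  assumes C: "Cas \<psi> j n \<noteq> 0"
    and K: "\<And>l. l \<in> {1..j} \<Longrightarrow> (\<Sum>r<j. b r * \<psi> l (n + int r)) = 0"
    and r: "r < j"
  shows "b r = 0"
proof -
  define A where "A = mat j j (\<lambda>(c, r). \<psi> (Suc c) (n + int r))"
  have car: "A \<in> carrier_mat j j" unfolding A_def by simp
  have "transpose_mat A = mat j j (\<lambda>(r, c). \<psi> (Suc c) (n + int r))"
    unfolding A_def by (rule eq_matI) auto
  then have "det A = Cas \<psi> j n" using det_transpose[OF car] Cas_mat by metis
  then have dA: "det A \<noteq> 0" using C by simp
  define v where "v = vec j b"
  have "A *\<^sub>v v = 0\<^sub>v j"
  proof (rule eq_vecI)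
    fix c assume c: "c < dim_vec (0\<^sub>v j :: complex vec)"
    then have c': "c < j" by simp
    have "(A *\<^sub>v v) $ c = (\<Sum>r<j. b r * \<psi> (Suc c) (n + int r))"
      using c' unfolding A_def v_def
      by (auto simp: mult_mat_vec_def scalar_prod_def atLeast0LessThan mult.commute intro!: sum.cong)
    also have "\<dots> = 0" using K[of "Suc c"] c' by simp
    finally show "(A *\<^sub>v v) $ c = 0\<^sub>v j $ c" using c' by simp
  qed (simp add: A_def)
  moreover have "v \<in> carrier_vec j" unfolding v_def by simp
  ultimately have "v = 0\<^sub>v j" using det_0_iff_vec_prod_zero[OF car] dA by blast
  then have "v $ r = 0" using r by simp
  then show ?thesis using r by (simp add: v_def)
qed


lemma coef_eq:
  assumes C: "Cas \<psi> j n \<noteq> 0" and len: "length gs = j"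
    and ann: "\<And>l. l \<in> {1..j} \<Longrightarrow> apply_ops gs (\<psi> l) n = 0"
    and r: "r < Suc j"
  shows "(-1) ^ (r + j) * det (Del \<psi> j n r) = (-1) ^ j * Cas \<psi> j n * acoef gs r n"
proof -
  define b where "b r = (-1) ^ (r + j) * det (Del \<psi> j n r) - (-1) ^ j * Cas \<psi> j n * acoef gs r n" for r
  have pj: "(-1::complex) ^ (j + j) = 1" by (simp add: mult_2[symmetric] power_mult)
  have bj: "b j = 0" unfolding b_def Del_top using acoef_top[of gs n] len pj
    by (simp add: power_add[symmetric])
  have S: "det (MM \<psi> j \<phi> n) - (-1) ^ j * Cas \<psi> j n * apply_ops gs \<phi> n = (\<Sum>r<Suc j. b r * \<phi> (n + int r))" for \<phi>
    unfolding MM_laplace apply_ops_sum len b_def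
    by (simp add: sum_subtractf sum_distrib_left algebra_simps)
  have K: "(\<Sum>r<j. b r * \<psi> l (n + int r)) = 0" if l: "l \<in> {1..j}" for l
  proof -
    have "(\<Sum>r<Suc j. b r * \<psi> l (n + int r)) = 0"
      using S[of "\<psi> l"] MM_psi_zero[OF l] ann[OF l] by simp
    then show ?thesis using bj by simp
  qed
  have "b r = 0"
  proof (cases "r < j")
    case True then show ?thesis using kernel[OF C K True] by simp
  next
    case False then have "r = j" using r by simp
    then show ?thesis using bj by simp
  qed
  then show ?thesis unfolding b_def by simp
qed

lemma op_eq:
  assumes C: "Cas \<psi> j n \<noteq> 0" and len: "length gs = j"
    and ann: "\<And>l. l \<in> {1..j} \<Longrightarrow> apply_ops gs (\<psi> l) n = 0"
  shows "det (MM \<psi> j \<phi> n) = (-1) ^ j * Cas \<psi> j n * apply_ops gs \<phi> n"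
proof -
  have "det (MM \<psi> j \<phi> n) = (\<Sum>r<Suc j. \<phi> (n + int r) * ((-1) ^ j * Cas \<psi> j n * acoef gs r n))"
    unfolding MM_laplace using coef_eq[OF C len ann] by (intro sum.cong) auto
  also have "\<dots> = (-1) ^ j * Cas \<psi> j n * apply_ops gs \<phi> n"
    unfolding apply_ops_sum len by (simp add: sum_distrib_left algebra_simps)
  finally show ?thesis .
qed

lemma intertw:
  fixes h \<phi> V :: "int \<Rightarrow> complex"
  assumes hnz: "\<And>n. h n \<noteq> 0"
    and heq: "\<And>n. - fdiff2 h n + V n * h n = e' * h (n + 2)"
    and peq: "\<And>n. - fdiff2 \<phi> n + V n * \<phi> n = e * \<phi> (n + 2)"
  shows "- fdiff2 (\<lambda>n. - fdiff \<phi> n + fdiff h n / h n * \<phi> n) n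
      + (V (n + 1) - 2 * fdiff (\<lambda>n. fdiff h n / h n) (n + 1)) * (- fdiff \<phi> n + fdiff h n / h n * \<phi> n)
      = e * (- fdiff \<phi> (n + 2) + fdiff h (n + 2) / h (n + 2) * \<phi> (n + 2))"
proof -
  have a1: "n + 1 + 1 = n + 2" "n + 2 + 1 = n + 3" "n + 1 + 2 = n + 3" by simp_all
  have eh0: "- (h (n+2) - 2 * h (n+1) + h n) + V n * h n = e' * h (n+2)"
    using heq[of n] by (simp add: fdiff2_def)
  have eh1: "- (h (n+3) - 2 * h (n+2) + h (n+1)) + V (n+1) * h (n+1) = e' * h (n+3)"
    using heq[of "n+1"] by (simp add: fdiff2_def a1)
  have ep0: "- (\<phi> (n+2) - 2 * \<phi> (n+1) + \<phi> n) + V n * \<phi> n = e * \<phi> (n+2)"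
    using peq[of n] by (simp add: fdiff2_def)
  have ep1: "- (\<phi> (n+3) - 2 * \<phi> (n+2) + \<phi> (n+1)) + V (n+1) * \<phi> (n+1) = e * \<phi> (n+3)"
    using peq[of "n+1"] by (simp add: fdiff2_def a1)
  show ?thesis
    using intertw_alg[OF hnz hnz hnz hnz eh0 eh1 ep0 ep1]
    by (simp add: fdiff_def fdiff2_def a1)
qed

lemma sum_shift1: "(\<Sum>l=1..i. g l) = (\<Sum>l<i. g (Suc l))"
  by (induction i) (auto simp: atLeastAtMostSuc_conv add.commute)

lemma VV_sum:
  "VV V0 \<psi> i n = complex_of_real (V0 (n + int i))
     - 2 * fdiff (\<lambda>m. \<Sum>l = 1..i. ff \<psi> l (m + int i + 1 - int l)) n"
proof (induction i arbitrary: n)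
  case 0 then show ?case by (simp add: fdiff_def)
next
  case (Suc i)
  define S where "S i m = (\<Sum>l = 1..i. ff \<psi> l (m + int i + 1 - int l))" for i m
  have SS: "S (Suc i) m = S i (m + 1) + ff \<psi> (Suc i) (m + 1)" for m
    unfolding S_def by (simp add: algebra_simps)
  have "VV V0 \<psi> (Suc i) n = complex_of_real (V0 (n + 1 + int i)) - 2 * fdiff (S i) (n + 1)
        - 2 * fdiff (ff \<psi> (Suc i)) (n + 1)"
    using Suc[of "n+1"] by (simp add: S_def[abs_def])
  also have "\<dots> = complex_of_real (V0 (n + int (Suc i))) - 2 * fdiff (S (Suc i)) n"
    by (simp add: fdiff_def SS algebra_simps)
  finally show ?case by (simp add: S_def[abs_def])
qed


theorem theorem4:
  fixes V0 :: "int \<Rightarrow> real" and \<psi> :: "nat \<Rightarrow> int \<Rightarrow> complex"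
    and \<epsilon> :: "nat \<Rightarrow> real" and k :: nat
  assumes eq: "\<And>i n. i \<in> {1..k} \<Longrightarrow>
      - fdiff2 (\<psi> i) n + complex_of_real (V0 n) * \<psi> i n = complex_of_real (\<epsilon> i) * \<psi> i (n + 2)"
    and distinct: "inj_on \<epsilon> {1..k}"
    and nonzero: "\<And>j n. j \<in> {1..k} \<Longrightarrow> Cas \<psi> j n \<noteq> 0"
  shows "\<forall>i \<in> {1..k}. \<forall>n.
      hatpsi \<psi> i n = (-1) ^ (i - 1) * Cas \<psi> i n / Cas \<psi> (i - 1) n
    \<and> - fdiff2 (hatpsi \<psi> i) n + VV V0 \<psi> (i - 1) n * hatpsi \<psi> i n
        = complex_of_real (\<epsilon> i) * hatpsi \<psi> i (n + 2)
    \<and> ff \<psi> i n = Cas \<psi> (i - 1) n / Cas \<psi> (i - 1) (n + 1)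
                 * (Cas \<psi> i (n + 1) / Cas \<psi> i n) - 1
    \<and> VV V0 \<psi> i n = complex_of_real (V0 (n + int i))
        - 2 * fdiff (\<lambda>m. \<Sum>l = 1..i. ff \<psi> l (m + int i + 1 - int l)) n
    \<and> VV V0 \<psi> i n = complex_of_real (V0 (n + int i))
        - 2 * fdiff (\<lambda>m. Dcas \<psi> i m / Cas \<psi> i (m + 1)) n"
proof -
  have Cnz: "Cas \<psi> j n \<noteq> 0" if "j \<le> k" for j n
  proof (cases "j = 0")
    case True then show ?thesis by (simp add: Cas_0)
  next
    case False then show ?thesis using nonzero[of j n] that by simp
  qed
  have P: "\<forall>l \<in> {1..j}. \<forall>n. hatpsi \<psi> l n = (-1) ^ (l - 1) * Cas \<psi> l n / Cas \<psi> (l - 1) n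
      \<and> hatpsi \<psi> l n \<noteq> 0" if "j \<le> k" for j
    using that
  proof (induction j)
    case 0 then show ?case by simp
  next
    case (Suc j)
    have jk: "j \<le> k" using Suc.prems by simp
    have IH: "\<forall>l \<in> {1..j}. \<forall>n. hatpsi \<psi> l n = (-1) ^ (l - 1) * Cas \<psi> l n / Cas \<psi> (l - 1) n
      \<and> hatpsi \<psi> l n \<noteq> 0" by (rule Suc.IH[OF jk])
    have new: "hatpsi \<psi> (Suc j) n = (-1) ^ j * Cas \<psi> (Suc j) n / Cas \<psi> j n
      \<and> hatpsi \<psi> (Suc j) n \<noteq> 0" for n
    proof -
      have ann: "apply_ops (fs \<psi> j) (\<psi> l) n = 0" if "l \<in> {1..j}" for l
        using annihilate[of j \<psi> l n] IH that by blast
      have Cj: "Cas \<psi> j n \<noteq> 0" using Cnz Suc.prems by simp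
      have "Cas \<psi> (Suc j) n = (-1) ^ j * Cas \<psi> j n * hatpsi \<psi> (Suc j) n"
        unfolding Cas_Suc hatpsi_Suc by (rule op_eq[OF Cj length_fs ann])
      moreover have "Cas \<psi> (Suc j) n \<noteq> 0" using Cnz Suc.prems by blast
      ultimately show ?thesis using Cj by (auto simp: field_simps)
    qed
    show ?case
    proof
      fix l assume l: "l \<in> {1..Suc j}"
      show "\<forall>n. hatpsi \<psi> l n = (-1) ^ (l - 1) * Cas \<psi> l n / Cas \<psi> (l - 1) n \<and> hatpsi \<psi> l n \<noteq> 0"
      proof (cases "l = Suc j")
        case True then show ?thesis using new by (metis diff_Suc_1)
      next
        case False then have "l \<in> {1..j}" using l by simp
        then show ?thesis using IH by blast
      qed
    qed
  qed
  have Pk: "\<forall>l \<in> {1..k}. \<forall>n. hatpsi \<psi> l n = (-1) ^ (l - 1) * Cas \<psi> l n / Cas \<psi> (l - 1) n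
      \<and> hatpsi \<psi> l n \<noteq> 0" by (rule P) simp
  then have PK: "\<And>l n. l \<in> {1..k} \<Longrightarrow> hatpsi \<psi> l n = (-1) ^ (l - 1) * Cas \<psi> l n / Cas \<psi> (l - 1) n"
    and PKnz: "\<And>l n. l \<in> {1..k} \<Longrightarrow> hatpsi \<psi> l n \<noteq> 0"
    by blast+
  have ann: "apply_ops (fs \<psi> j) (\<psi> l) n = 0" if "l \<in> {1..j}" "j \<le> k" for l j n
    using annihilate[of j \<psi> l n] PKnz that by auto
  have EQ: "\<forall>i n. j < i \<longrightarrow> i \<le> k \<longrightarrow>
      - fdiff2 (apply_ops (fs \<psi> j) (\<psi> i)) n + VV V0 \<psi> j n * apply_ops (fs \<psi> j) (\<psi> i) n
        = complex_of_real (\<epsilon> i) * apply_ops (fs \<psi> j) (\<psi> i) (n + 2)" for j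
  proof (induction j)
    case 0 then show ?case using eq by (simp add: apply_ops_Nil)
  next
    case (Suc j)
    show ?case
    proof (intro allI impI)
      fix i n assume i: "Suc j < i" "i \<le> k"
      define h where "h = hatpsi \<psi> (Suc j)"
      define X where "X = apply_ops (fs \<psi> j) (\<psi> i)"
      have hnz: "\<And>n. h n \<noteq> 0" unfolding h_def using PKnz i by simp
      have heq: "\<And>n. - fdiff2 h n + VV V0 \<psi> j n * h n = complex_of_real (\<epsilon> (Suc j)) * h (n + 2)"
        unfolding h_def hatpsi_Suc using Suc.IH i by simp
      have peq: "\<And>n. - fdiff2 X n + VV V0 \<psi> j n * X n = complex_of_real (\<epsilon> i) * X (n + 2)"
        unfolding X_def using Suc.IH i by simp
      have A: "apply_ops (fs \<psi> (Suc j)) (\<psi> i) = (\<lambda>n. - fdiff X n + fdiff h n / h n * X n)"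
        unfolding fs_Suc apply_ops_snoc X_def h_def by simp
      have V: "VV V0 \<psi> (Suc j) n = VV V0 \<psi> j (n + 1) - 2 * fdiff (\<lambda>n. fdiff h n / h n) (n + 1)"
        by (simp add: ff_Suc h_def)
      show "- fdiff2 (apply_ops (fs \<psi> (Suc j)) (\<psi> i)) n +
          VV V0 \<psi> (Suc j) n * apply_ops (fs \<psi> (Suc j)) (\<psi> i) n =
          complex_of_real (\<epsilon> i) * apply_ops (fs \<psi> (Suc j)) (\<psi> i) (n + 2)"
        unfolding A V by (rule intertw[OF hnz heq peq])
    qed
  qed
  show ?thesis
  proof (intro ballI allI)
    fix i n assume i: "i \<in> {1..k}"
    then obtain j where j: "i = Suc j" by (cases i) auto
    have c1: "hatpsi \<psi> i n = (-1) ^ (i - 1) * Cas \<psi> i n / Cas \<psi> (i - 1) n" using PK i by simp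
    have c2: "- fdiff2 (hatpsi \<psi> i) n + VV V0 \<psi> (i - 1) n * hatpsi \<psi> i n
        = complex_of_real (\<epsilon> i) * hatpsi \<psi> i (n + 2)"
      using EQ[of j] i j by (simp add: hatpsi_Suc)
    have c3: "ff \<psi> i m = Cas \<psi> (i - 1) m / Cas \<psi> (i - 1) (m + 1)
                 * (Cas \<psi> i (m + 1) / Cas \<psi> i m) - 1" for m
    proof -
      have n1: "Cas \<psi> j m \<noteq> 0" "Cas \<psi> j (m+1) \<noteq> 0" "Cas \<psi> i m \<noteq> 0" "Cas \<psi> i (m+1) \<noteq> 0"
        using Cnz i j by auto
      have "ff \<psi> i m = fdiff (hatpsi \<psi> i) m / hatpsi \<psi> i m" unfolding j ff_Suc by simp
      also have "\<dots> = ((-1) ^ j * Cas \<psi> i (m+1) / Cas \<psi> j (m+1) - (-1) ^ j * Cas \<psi> i m / Cas \<psi> j m)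
          / ((-1) ^ j * Cas \<psi> i m / Cas \<psi> j m)"
        unfolding fdiff_def using PK[OF i] j by simp
      also have "\<dots> = Cas \<psi> j m / Cas \<psi> j (m + 1) * (Cas \<psi> i (m + 1) / Cas \<psi> i m) - 1"
        using n1 by (simp add: field_simps)
      finally show ?thesis using j by simp
    qed
    have c4: "VV V0 \<psi> i n = complex_of_real (V0 (n + int i))
        - 2 * fdiff (\<lambda>m. \<Sum>l = 1..i. ff \<psi> l (m + int i + 1 - int l)) n" by (rule VV_sum)
    have Ssum: "(\<Sum>l = 1..i. ff \<psi> l (m + int i + 1 - int l)) = Dcas \<psi> i m / Cas \<psi> i (m + 1) - of_nat i" for m
    proof -
      have Ci: "Cas \<psi> i (m + 1) \<noteq> 0" using Cnz i by simp
      have ce: "(-1) ^ (j + i) * det (Del \<psi> i (m + 1) j) = (-1) ^ i * Cas \<psi> i (m + 1) * acoef (fs \<psi> i) j (m + 1)"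
      proof (rule coef_eq[OF Ci length_fs])
        fix l assume l: "l \<in> {1..i}"
        have ik: "i \<le> k" using i by simp
        show "apply_ops (fs \<psi> i) (\<psi> l) (m + 1) = 0" by (rule ann[OF l ik])
      next
        show "j < Suc i" using j by simp
      qed
      have fsne: "fs \<psi> i \<noteq> []" using j by (metis length_fs nat.distinct(1) list.size(3))
      have ac: "acoef (fs \<psi> i) j (m + 1) = (-1) ^ j * (\<Sum>l<i. 1 + ff \<psi> (Suc l) (m + int i - int l))"
      proof -
        have lj: "length (fs \<psi> i) - 1 = j" "length (fs \<psi> i) = i" using j by simp_all
        have ac0: "acoef (fs \<psi> i) j (m + 1) = (-1) ^ j * (\<Sum>l<i. 1 + (fs \<psi> i ! l) (m + 1 + int i - 1 - int l))"
          using acoef_sub[OF fsne, of "m + 1"] unfolding lj(1) unfolding lj(2) .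
        show ?thesis unfolding ac0
          by (intro arg_cong[where f="\<lambda>x. (-1) ^ j * x"] sum.cong refl) (simp del: fs.simps add: fs_nth)
      qed
      have dl: "det (Del \<psi> i (m + 1) j) = Dcas \<psi> i m" using Del_sub[of i \<psi> "m+1"] j by simp
      have sg: "(-1::complex) ^ (j + i) = - 1" "(-1::complex) ^ i * (-1) ^ j = -1"
        using j by (simp_all add: power_add[symmetric] mult_2[symmetric] power_mult)
      have "Dcas \<psi> i m = Cas \<psi> i (m + 1) * (\<Sum>l<i. 1 + ff \<psi> (Suc l) (m + int i - int l))"
      proof -
        have "- Dcas \<psi> i m = ((-1) ^ i * (-1) ^ j) * (Cas \<psi> i (m + 1) * (\<Sum>l<i. 1 + ff \<psi> (Suc l) (m + int i - int l)))"
          using ce unfolding ac dl sg(1) by (simp only: mult.assoc mult_minus1 mult.left_commute)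
        then show ?thesis unfolding sg(2) by simp
      qed
      then have "(\<Sum>l<i. 1 + ff \<psi> (Suc l) (m + int i - int l)) = Dcas \<psi> i m / Cas \<psi> i (m + 1)"
        using Ci by (simp add: field_simps)
      moreover have "(\<Sum>l = 1..i. ff \<psi> l (m + int i + 1 - int l)) = (\<Sum>l<i. ff \<psi> (Suc l) (m + int i - int l))"
        unfolding sum_shift1 by (simp add: add_diff_eq)
      ultimately show ?thesis by (simp add: sum.distrib eq_diff_eq add.commute)
    qed
    have c5: "VV V0 \<psi> i n = complex_of_real (V0 (n + int i))
        - 2 * fdiff (\<lambda>m. Dcas \<psi> i m / Cas \<psi> i (m + 1)) n"
      unfolding c4 Ssum by (simp add: fdiff_def)
    show "hatpsi \<psi> i n = (-1) ^ (i - 1) * Cas \<psi> i n / Cas \<psi> (i - 1) n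
    \<and> - fdiff2 (hatpsi \<psi> i) n + VV V0 \<psi> (i - 1) n * hatpsi \<psi> i n
        = complex_of_real (\<epsilon> i) * hatpsi \<psi> i (n + 2)
    \<and> ff \<psi> i n = Cas \<psi> (i - 1) n / Cas \<psi> (i - 1) (n + 1)
                 * (Cas \<psi> i (n + 1) / Cas \<psi> i n) - 1
    \<and> VV V0 \<psi> i n = complex_of_real (V0 (n + int i))
        - 2 * fdiff (\<lambda>m. \<Sum>l = 1..i. ff \<psi> l (m + int i + 1 - int l)) n
    \<and> VV V0 \<psi> i n = complex_of_real (V0 (n + int i))
        - 2 * fdiff (\<lambda>m. Dcas \<psi> i m / Cas \<psi> i (m + 1)) n"
      using c1 c2 c3 c4 c5 by blast
  qed
qed

end
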